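(* Let $S$ be a polynomial ring over a field, $t$ a positive integer, $I\subseteq S$ an ideal and $\sigma$ a term order such that $\operatorname{in}_\sigma(I)$ is a squarefree monomial ideal (so that $I$ is radical and $I=\bigcap_{\mathfrak p\in\operatorname{Min}(I)}\mathfrak p$). Suppose that: (a) $\operatorname{in}_\sigma(\mathfrak p)$ is a squarefree monomial ideal for each $\mathfrak p\in\operatorname{Min}(I)$; (b) $(\operatorname{in}_\sigma(I))^{(t)}=(\operatorname{in}_\sigma(I))^t$; (c) $\operatorname{in}_\sigma(\mathfrak p^{(t)})=(\operatorname{in}_\sigma(\mathfrak p))^{(t)}$ for each $\mathfrak p\in\operatorname{Min}(I)$; (d) $\operatorname{in}_\sigma(I)=\bigcap_{\mathfrak p\in\operatorname{Min}(I)}\operatorname{in}_\sigma(\mathfrak p)$. Then $I^{(t)}=I^t$.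
   Context: $\operatorname{Min}(I)$ is the set of minimal primes of $I$; $I^{(t)}=\bigcap_{\mathfrak p\in\operatorname{Ass}(I)}(I^tS_{\mathfrak p}\cap S)$ is the $t$-th symbolic power; $\operatorname{in}_\sigma$ denotes the initial ideal. *)

theory Defs
  imports "HOL-Library.Poly_Mapping"
begin

text \<open>Multivariate polynomials over 'a in variables of type 'v:
  finitely supported maps from monomials (finitely supported exponent vectors) to coefficients.\<close>
type_synonym ('v, 'a) mpoly = "('v \<Rightarrow>\<^sub>0 nat) \<Rightarrow>\<^sub>0 'a"

definition is_ideal :: "'r::comm_ring_1 set \<Rightarrow> bool" where
  "is_ideal I \<longleftrightarrow> 0 \<in> I \<and> (\<forall>a\<in>I. \<forall>b\<in>I. a + b \<in> I) \<and> (\<forall>r. \<forall>a\<in>I. r * a \<in> I)"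

definition ideal_gen :: "'r::comm_ring_1 set \<Rightarrow> 'r set" where
  "ideal_gen G = \<Inter>{J. is_ideal J \<and> G \<subseteq> J}"

definition ideal_mult :: "'r::comm_ring_1 set \<Rightarrow> 'r set \<Rightarrow> 'r set" where
  "ideal_mult I J = ideal_gen {a * b | a b. a \<in> I \<and> b \<in> J}"

primrec ideal_pow :: "'r::comm_ring_1 set \<Rightarrow> nat \<Rightarrow> 'r set" where
  "ideal_pow I 0 = UNIV"
| "ideal_pow I (Suc n) = ideal_mult I (ideal_pow I n)"

definition prime_ideal :: "'r::comm_ring_1 set \<Rightarrow> bool" where
  "prime_ideal P \<longleftrightarrow> is_ideal P \<and> P \<noteq> UNIV \<and> (\<forall>a b. a * b \<in> P \<longrightarrow> a \<in> P \<or> b \<in> P)"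

definition ideal_colon :: "'r::comm_ring_1 set \<Rightarrow> 'r \<Rightarrow> 'r set" where
  "ideal_colon I f = {g. g * f \<in> I}"

definition Ass :: "'r::comm_ring_1 set \<Rightarrow> 'r set set" where
  "Ass I = {P. prime_ideal P \<and> (\<exists>f. P = ideal_colon I f)}"

definition Min_primes :: "'r::comm_ring_1 set \<Rightarrow> 'r set set" where
  "Min_primes I = {P. prime_ideal P \<and> I \<subseteq> P \<and>
     (\<forall>Q. prime_ideal Q \<and> I \<subseteq> Q \<and> Q \<subseteq> P \<longrightarrow> Q = P)}"

text \<open>I^t S_P \<inter> S = {f. \<exists>s \<notin> P. s f \<in> I^t} (contraction of the localization).\<close>
definition local_contraction :: "'r::comm_ring_1 set \<Rightarrow> 'r set \<Rightarrow> 'r set" where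
  "local_contraction J P = {f. \<exists>s. s \<notin> P \<and> s * f \<in> J}"

definition symb_pow :: "'r::comm_ring_1 set \<Rightarrow> nat \<Rightarrow> 'r set" where
  "symb_pow I t = (\<Inter>P\<in>Ass I. local_contraction (ideal_pow I t) P)"

definition term_order :: "(('v \<Rightarrow>\<^sub>0 nat) \<Rightarrow> ('v \<Rightarrow>\<^sub>0 nat) \<Rightarrow> bool) \<Rightarrow> bool" where
  "term_order le \<longleftrightarrow>
     (\<forall>a. le a a) \<and>
     (\<forall>a b. le a b \<and> le b a \<longrightarrow> a = b) \<and>
     (\<forall>a b c. le a b \<and> le b c \<longrightarrow> le a c) \<and>
     (\<forall>a b. le a b \<or> le b a) \<and>
     (\<forall>a. le 0 a) \<and>
     (\<forall>a b c. le a b \<longrightarrow> le (a + c) (b + c))"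

definition lead_mon :: "(('v \<Rightarrow>\<^sub>0 nat) \<Rightarrow> ('v \<Rightarrow>\<^sub>0 nat) \<Rightarrow> bool) \<Rightarrow> ('v, 'a::zero) mpoly \<Rightarrow> ('v \<Rightarrow>\<^sub>0 nat)" where
  "lead_mon le f = (THE m. m \<in> Poly_Mapping.keys f \<and> (\<forall>m'\<in>Poly_Mapping.keys f. le m' m))"

definition mon :: "('v \<Rightarrow>\<^sub>0 nat) \<Rightarrow> ('v, 'a::{zero,one}) mpoly" where
  "mon m = Poly_Mapping.single m 1"

definition init_ideal :: "(('v \<Rightarrow>\<^sub>0 nat) \<Rightarrow> ('v \<Rightarrow>\<^sub>0 nat) \<Rightarrow> bool) \<Rightarrow> ('v, 'a::field) mpoly set \<Rightarrow> ('v, 'a) mpoly set" where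
  "init_ideal le I = ideal_gen {mon (lead_mon le f) | f. f \<in> I \<and> f \<noteq> 0}"

definition squarefree_monomial_ideal :: "('v, 'a::field) mpoly set \<Rightarrow> bool" where
  "squarefree_monomial_ideal J \<longleftrightarrow>
     (\<exists>G. (\<forall>m\<in>G. \<forall>v. Poly_Mapping.lookup m v \<le> 1) \<and> J = ideal_gen (mon ` G))"

end

theory Submission
  imports Defs Complex_Main
begin


section \<open>Ideal basics\<close>

lemma is_idealD:
  assumes "is_ideal I"
  shows "0 \<in> I" "a \<in> I \<Longrightarrow> b \<in> I \<Longrightarrow> a + b \<in> I" "a \<in> I \<Longrightarrow> r * a \<in> I"
  using assms unfolding is_ideal_def by auto

lemma ideal_mult_right: "is_ideal I \<Longrightarrow> a \<in> I \<Longrightarrow> a * r \<in> I"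
  using is_idealD(3)[of I a r] by (simp add: mult.commute)

lemma ideal_uminus: "is_ideal I \<Longrightarrow> a \<in> I \<Longrightarrow> - a \<in> I"
  using is_idealD(3)[of I a "-1"] by simp

lemma ideal_diff: "is_ideal I \<Longrightarrow> a \<in> I \<Longrightarrow> b \<in> I \<Longrightarrow> a - b \<in> I"
  using is_idealD(2)[of I a "-b"] ideal_uminus[of I b] by simp

lemma ideal_sum: "is_ideal I \<Longrightarrow> (\<And>x. x \<in> A \<Longrightarrow> f x \<in> I) \<Longrightarrow> sum f A \<in> I"
  by (induction A rule: infinite_finite_induct) (auto simp: is_idealD)

lemma ideal_prod_mem: "is_ideal I \<Longrightarrow> finite A \<Longrightarrow> a \<in> A \<Longrightarrow> f a \<in> I \<Longrightarrow> prod f A \<in> I"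
  by (metis ideal_mult_right prod.remove)

lemma is_ideal_UNIV: "is_ideal UNIV" by (simp add: is_ideal_def)

lemma is_ideal_Inter: "(\<And>J. J \<in> S \<Longrightarrow> is_ideal J) \<Longrightarrow> is_ideal (\<Inter>S)"
  unfolding is_ideal_def by auto

lemma is_ideal_gen: "is_ideal (ideal_gen G)"
  unfolding ideal_gen_def by (rule is_ideal_Inter) auto

lemma gen_subset: "G \<subseteq> ideal_gen G"
  unfolding ideal_gen_def by auto

lemma gen_least: "is_ideal J \<Longrightarrow> G \<subseteq> J \<Longrightarrow> ideal_gen G \<subseteq> J"
  unfolding ideal_gen_def by auto

lemma gen_mono: "G \<subseteq> H \<Longrightarrow> ideal_gen G \<subseteq> ideal_gen H"
  by (meson gen_least gen_subset is_ideal_gen order_trans)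

lemma gen_ideal: "is_ideal J \<Longrightarrow> ideal_gen J = J"
  by (simp add: gen_least gen_subset subset_antisym)

lemma is_ideal_mult: "is_ideal (ideal_mult I J)"
  unfolding ideal_mult_def by (rule is_ideal_gen)

lemma mult_mem: "a \<in> I \<Longrightarrow> b \<in> J \<Longrightarrow> a * b \<in> ideal_mult I J"
  unfolding ideal_mult_def by (rule gen_subset[THEN subsetD]) blast

lemma ideal_mult_least: "is_ideal K \<Longrightarrow> (\<And>a b. a \<in> I \<Longrightarrow> b \<in> J \<Longrightarrow> a * b \<in> K) \<Longrightarrow> ideal_mult I J \<subseteq> K"
  unfolding ideal_mult_def by (rule gen_least) auto

lemma ideal_mult_mono: "I \<subseteq> I' \<Longrightarrow> J \<subseteq> J' \<Longrightarrow> ideal_mult I J \<subseteq> ideal_mult I' J'"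
  unfolding ideal_mult_def by (rule gen_mono) blast

lemma is_ideal_pow: "is_ideal (ideal_pow I n)"
  by (cases n) (auto simp: is_ideal_UNIV is_ideal_mult)

lemma ideal_pow_mono: "I \<subseteq> J \<Longrightarrow> ideal_pow I n \<subseteq> ideal_pow J n"
  by (induction n) (simp_all add: ideal_mult_mono)

lemma ideal_colon_ideal: 
  assumes "is_ideal I" shows "is_ideal (ideal_colon I f)"
  unfolding is_ideal_def ideal_colon_def
proof (intro conjI ballI allI)
  show "0 \<in> {g. g * f \<in> I}" using is_idealD(1)[OF assms] by simp
next
  fix a b assume "a \<in> {g. g * f \<in> I}" "b \<in> {g. g * f \<in> I}"
  then show "a + b \<in> {g. g * f \<in> I}" using is_idealD(2)[OF assms] by (simp add: distrib_right)
next
  fix r a assume "a \<in> {g. g * f \<in> I}"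
  then show "r * a \<in> {g. g * f \<in> I}" using is_idealD(3)[OF assms, of "a * f" r] by (simp add: mult.assoc)
qed

lemma gen_mult_gen:
  fixes A B :: "'r::comm_ring_1 set"
  shows "ideal_mult (ideal_gen A) (ideal_gen B) \<subseteq> ideal_gen {a * b | a b. a \<in> A \<and> b \<in> B}"
proof -
  let ?X = "ideal_gen {a * b | a b. a \<in> A \<and> b \<in> B}"
  have X: "is_ideal ?X" by (rule is_ideal_gen)
  have step1: "a * b \<in> ?X" if "a \<in> ideal_gen A" "b \<in> B" for a b
  proof -
    have "is_ideal {a. a * b \<in> ?X}"
      using ideal_colon_ideal[OF X, of b] unfolding ideal_colon_def .
    moreover have "A \<subseteq> {a. a * b \<in> ?X}"
    proof
      fix a assume "a \<in> A"
      then have "a * b \<in> {a * b | a b. a \<in> A \<and> b \<in> B}" using that(2) by blast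
      then show "a \<in> {a. a * b \<in> ?X}" using gen_subset by fast
    qed
    ultimately show ?thesis using gen_least[of "{a. a * b \<in> ?X}" A] that(1) by auto
  qed
  have step2: "a * b \<in> ?X" if "a \<in> ideal_gen A" "b \<in> ideal_gen B" for a b
  proof -
    have "is_ideal {b. a * b \<in> ?X}"
      using ideal_colon_ideal[OF X, of a] unfolding ideal_colon_def by (simp add: mult.commute)
    moreover have "B \<subseteq> {b. a * b \<in> ?X}" using step1[OF that(1)] by auto
    ultimately show ?thesis using gen_least[of "{b. a * b \<in> ?X}" B] that(2) by auto
  qed
  show ?thesis by (rule ideal_mult_least[OF X step2])
qed

lemma pow_scale:
  fixes c :: "'r::comm_ring_1"
  assumes J: "is_ideal J" and cQ: "\<And>q. q \<in> Q \<Longrightarrow> c * q \<in> J"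
  shows "x \<in> ideal_pow Q n \<Longrightarrow> c ^ n * x \<in> ideal_pow J n"
proof (induction n arbitrary: x)
  case 0 then show ?case by simp
next
  case (Suc n)
  let ?K = "{x. c ^ Suc n * x \<in> ideal_pow J (Suc n)}"
  have "is_ideal ?K"
    using ideal_colon_ideal[OF is_ideal_pow[of J "Suc n"], of "c ^ Suc n"] unfolding ideal_colon_def
    by (simp add: mult.commute)
  moreover have "ideal_mult Q (ideal_pow Q n) \<subseteq> ?K"
  proof (rule ideal_mult_least[OF \<open>is_ideal ?K\<close>])
    fix a b assume "a \<in> Q" "b \<in> ideal_pow Q n"
    then have "(c * a) * (c ^ n * b) \<in> ideal_pow J (Suc n)"
      using Suc.IH cQ by (simp add: mult_mem)
    then show "a * b \<in> ?K" by (simp add: algebra_simps)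
  qed
  ultimately show ?case using Suc.prems by auto
qed

lemma ideal_mult_sub_left: "is_ideal I \<Longrightarrow> ideal_mult I J \<subseteq> I"
  by (rule ideal_mult_least) (auto simp: ideal_mult_right)

section \<open>Primes, localization, symbolic powers\<close>

lemma prime_one: "prime_ideal P \<Longrightarrow> 1 \<notin> P"
  unfolding prime_ideal_def using is_idealD(3)[of P 1] by (metis UNIV_eq_I mult.right_neutral)

lemma prime_prod:
  assumes "prime_ideal P" "finite A" "\<And>a. a \<in> A \<Longrightarrow> f a \<notin> P"
  shows "prod f A \<notin> P"
  using assms(2,3)
proof (induction A rule: finite_induct)
  case empty then show ?case using prime_one[OF assms(1)] by simp
next
  case (insert x F)
  then show ?case using assms(1) unfolding prime_ideal_def by auto
qed

lemma loc_ideal: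
  assumes J: "is_ideal J" and Q: "prime_ideal Q"
  shows "is_ideal (local_contraction J Q)"
  unfolding is_ideal_def local_contraction_def
proof (intro conjI ballI allI)
  have "1 * 0 \<in> J" using is_idealD(1)[OF J] by simp
  then show "0 \<in> {f. \<exists>s. s \<notin> Q \<and> s * f \<in> J}"
    using prime_one[OF Q] by blast
next
  fix a b assume "a \<in> {f. \<exists>s. s \<notin> Q \<and> s * f \<in> J}" "b \<in> {f. \<exists>s. s \<notin> Q \<and> s * f \<in> J}"
  then obtain s1 s2 where s: "s1 \<notin> Q" "s1 * a \<in> J" "s2 \<notin> Q" "s2 * b \<in> J" by auto
  have eq: "(s1 * s2) * (a + b) = s2 * (s1 * a) + s1 * (s2 * b)" by (simp add: algebra_simps)
  have "s1 * s2 \<notin> Q" using Q s unfolding prime_ideal_def by blast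
  moreover have "(s1 * s2) * (a + b) \<in> J"
    unfolding eq by (rule is_idealD(2)[OF J]; rule is_idealD(3)[OF J]; fact)
  ultimately show "a + b \<in> {f. \<exists>s. s \<notin> Q \<and> s * f \<in> J}" by blast
next
  fix r a assume "a \<in> {f. \<exists>s. s \<notin> Q \<and> s * f \<in> J}"
  then obtain s where s: "s \<notin> Q" "s * a \<in> J" by auto
  have eq: "s * (r * a) = r * (s * a)" by (simp add: algebra_simps)
  have "r * (s * a) \<in> J" by (rule is_idealD(3)[OF J s(2)])
  then have "s * (r * a) \<in> J" by (simp only: eq)
  then show "r * a \<in> {f. \<exists>s. s \<notin> Q \<and> s * f \<in> J}" using s(1) by blast
qed

lemma symb_pow_ideal: "is_ideal (symb_pow I t)"
  unfolding symb_pow_def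
  by (rule is_ideal_Inter) (auto simp: Ass_def intro!: loc_ideal is_ideal_pow)

lemma sub_loc: "prime_ideal Q \<Longrightarrow> J \<subseteq> local_contraction J Q"
  unfolding local_contraction_def using prime_one by fastforce

lemma pow_sub_symb_pow: "ideal_pow I t \<subseteq> symb_pow I t"
  unfolding symb_pow_def Ass_def using sub_loc by blast

lemma Ass_prime:
  assumes "prime_ideal P" shows "Ass P = {P}"
proof -
  have "Q = P" if "Q \<in> Ass P" for Q
  proof -
    from that obtain f where Q: "prime_ideal Q" "Q = ideal_colon P f" by (auto simp: Ass_def)
    have "f \<notin> P"
    proof
      assume "f \<in> P"
      then have "Q = UNIV" using Q assms unfolding ideal_colon_def prime_ideal_def
        by (auto intro: is_idealD(3))
      then show False using Q unfolding prime_ideal_def by auto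
    qed
    then show ?thesis using Q assms unfolding ideal_colon_def prime_ideal_def
      by (auto intro: ideal_mult_right)
  qed
  moreover have "P = ideal_colon P 1" unfolding ideal_colon_def by simp
  then have "P \<in> Ass P" using assms unfolding Ass_def by blast
  ultimately show ?thesis by blast
qed

lemma symb_pow_prime: "prime_ideal P \<Longrightarrow> symb_pow P t = local_contraction (ideal_pow P t) P"
  unfolding symb_pow_def by (simp add: Ass_prime)

lemma prime_finite_inter:
  fixes Q :: "'r::comm_ring_1 set"
  assumes "prime_ideal Q" "finite F" "\<And>M. M \<in> F \<Longrightarrow> is_ideal M" "Q = (\<Inter>M\<in>F. ideal_colon M h)"
  shows "\<exists>M\<in>F. ideal_colon M h \<subseteq> Q"
proof (rule ccontr)
  assume "\<not> ?thesis"
  then have "\<forall>M\<in>F. \<exists>y. y \<in> ideal_colon M h \<and> y \<notin> Q" by blast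
  then obtain y where y: "\<And>M. M \<in> F \<Longrightarrow> y M \<in> ideal_colon M h \<and> y M \<notin> Q" by metis
  have "prod y F \<notin> Q" using prime_prod[OF assms(1,2)] y by blast
  moreover have "prod y F \<in> ideal_colon M h" if "M \<in> F" for M
    using ideal_prod_mem[OF ideal_colon_ideal[OF assms(3)[OF that]] assms(2) that] y that by blast
  ultimately show False using assms(4) by blast
qed




section \<open>Dickson\<close>

definition divides :: "('v \<Rightarrow>\<^sub>0 nat) \<Rightarrow> ('v \<Rightarrow>\<^sub>0 nat) \<Rightarrow> bool" where
  "divides m n \<longleftrightarrow> (\<forall>v. Poly_Mapping.lookup m v \<le> Poly_Mapping.lookup n v)"

lemma divides_add: "divides m n \<Longrightarrow> n = m + (n - m)"
  unfolding divides_def by (intro poly_mapping_eqI) (simp add: lookup_add lookup_minus)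

lemma divides_add_left: "divides g y \<Longrightarrow> divides g (x + y)"
  unfolding divides_def by (simp add: lookup_add add_increasing)

lemma nat_mono_subseq:
  fixes s :: "nat \<Rightarrow> nat"
  shows "\<exists>\<tau>::nat\<Rightarrow>nat. strict_mono \<tau> \<and> (\<forall>i j. i \<le> j \<longrightarrow> s (\<tau> i) \<le> s (\<tau> j))"
proof -
  have "\<exists>f. strict_mono f \<and> monoseq (\<lambda>n. s (f n))" by (rule seq_monosub)
  then obtain f where f: "strict_mono f" "monoseq (\<lambda>n. s (f n))" by auto
  show ?thesis
  proof (cases "\<forall>m n. m \<le> n \<longrightarrow> s (f m) \<le> s (f n)")
    case True show ?thesis apply (rule exI[of _ f]) using True f(1) by simp
  next
    case False
    then have dec: "\<forall>m n. m \<le> n \<longrightarrow> s (f n) \<le> s (f m)" using f(2) unfolding monoseq_def by metis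
    define v where "v = (LEAST v. v \<in> range (\<lambda>n. s (f n)))"
    have "v \<in> range (\<lambda>n. s (f n))" unfolding v_def by (rule LeastI) blast
    then obtain N where N: "s (f N) = v" by blast
    have const: "s (f n) = v" if "n \<ge> N" for n
    proof -
      have "s (f n) \<le> v" using dec[rule_format, OF that] N by simp
      moreover have "v \<le> s (f n)" unfolding v_def by (rule Least_le) blast
      ultimately show ?thesis by simp
    qed
    have 1: "strict_mono (\<lambda>n. f (n + N))" using f(1) unfolding strict_mono_def by simp
    have 2: "\<forall>i j. i \<le> j \<longrightarrow> s (f (i + N)) \<le> s (f (j + N))" using const by simp
    show ?thesis apply (rule exI[of _ "\<lambda>n. f (n + N)"]) using 1 2 by simp
  qed
qed

lemma dickson_gen:
  fixes m :: "nat \<Rightarrow> ('v \<Rightarrow>\<^sub>0 nat)"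
  assumes "finite V"
  shows "\<exists>\<sigma>::nat\<Rightarrow>nat. strict_mono \<sigma> \<and> (\<forall>v\<in>V. \<forall>i j. i \<le> j \<longrightarrow> Poly_Mapping.lookup (m (\<sigma> i)) v \<le> Poly_Mapping.lookup (m (\<sigma> j)) v)"
  using assms
proof (induction V rule: finite_induct)
  case empty
  have "strict_mono (\<lambda>n::nat. n)" by (simp add: strict_mono_def)
  then show ?case by blast
next
  case (insert w V)
  obtain \<sigma> :: "nat \<Rightarrow> nat" where \<sigma>0: "strict_mono \<sigma> \<and>
    (\<forall>v\<in>V. \<forall>i j. i \<le> j \<longrightarrow> Poly_Mapping.lookup (m (\<sigma> i)) v \<le> Poly_Mapping.lookup (m (\<sigma> j)) v)"
    using insert.IH by (rule exE)
  note \<sigma> = conjunct1[OF \<sigma>0] conjunct2[OF \<sigma>0]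
  obtain \<tau> :: "nat \<Rightarrow> nat" where \<tau>0: "strict_mono \<tau> \<and> (\<forall>i j. i \<le> j \<longrightarrow>
      Poly_Mapping.lookup (m (\<sigma> (\<tau> i))) w \<le> Poly_Mapping.lookup (m (\<sigma> (\<tau> j))) w)"
    using nat_mono_subseq[of "\<lambda>n. Poly_Mapping.lookup (m (\<sigma> n)) w"] by (rule exE)
  note \<tau> = conjunct1[OF \<tau>0] conjunct2[OF \<tau>0]
  have A: "strict_mono (\<lambda>n. \<sigma> (\<tau> n))" using \<sigma>(1) \<tau>(1) unfolding strict_mono_def by simp
  have B: "\<forall>v\<in>insert w V. \<forall>i j. i \<le> j \<longrightarrow> Poly_Mapping.lookup (m (\<sigma> (\<tau> i))) v \<le> Poly_Mapping.lookup (m (\<sigma> (\<tau> j))) v"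
  proof (intro ballI allI impI)
    fix v and i j :: nat assume v: "v \<in> insert w V" and ij: "i \<le> j"
    have tij: "\<tau> i \<le> \<tau> j" using \<tau>(1) ij by (simp add: strict_mono_less_eq)
    show "Poly_Mapping.lookup (m (\<sigma> (\<tau> i))) v \<le> Poly_Mapping.lookup (m (\<sigma> (\<tau> j))) v"
    proof (cases "v = w")
      case True then show ?thesis using \<tau>(2) ij by simp
    next
      case False then have "v \<in> V" using v by simp
      then show ?thesis using \<sigma>(2) tij by simp
    qed
  qed
  show ?case apply (rule exI[of _ "\<lambda>n. \<sigma> (\<tau> n)"]) using A B by simp
qed

lemma dickson:
  fixes m :: "nat \<Rightarrow> ('v::finite \<Rightarrow>\<^sub>0 nat)"
  shows "\<exists>i j. i < j \<and> divides (m i) (m j)"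
proof -
  obtain \<sigma> :: "nat \<Rightarrow> nat" where \<sigma>: "strict_mono \<sigma>"
    "\<forall>v\<in>UNIV. \<forall>i j. i \<le> j \<longrightarrow> Poly_Mapping.lookup (m (\<sigma> i)) v \<le> Poly_Mapping.lookup (m (\<sigma> j)) v"
    using dickson_gen[of "UNIV :: 'v set" m] by auto
  have "\<sigma> 0 < \<sigma> 1" using \<sigma>(1) by (simp add: strict_mono_def)
  moreover have "divides (m (\<sigma> 0)) (m (\<sigma> 1))" using \<sigma>(2) unfolding divides_def by simp
  ultimately show ?thesis by blast
qed

section \<open>Term orders\<close>

locale torder =
  fixes le :: "('v::finite \<Rightarrow>\<^sub>0 nat) \<Rightarrow> ('v \<Rightarrow>\<^sub>0 nat) \<Rightarrow> bool"
  assumes to: "term_order le"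
begin

lemma refl: "le a a" and antisym: "le a b \<Longrightarrow> le b a \<Longrightarrow> a = b"
  and trans: "le a b \<Longrightarrow> le b c \<Longrightarrow> le a c" and total: "le a b \<or> le b a"
  and zero: "le 0 a" and compat: "le a b \<Longrightarrow> le (a + c) (b + c)"
  using to unfolding term_order_def by blast+

lemma le_add: "le a (c + a)"
  using compat[OF zero[of c], of a] by simp

lemma le_add_mono: "le x a \<Longrightarrow> le y b \<Longrightarrow> le (x + y) (a + b)"
  using compat[of x a y] compat[of y b a] trans by (simp add: add.commute)

lemma divides_le: "divides m n \<Longrightarrow> le m n"
  using divides_add[of m n] le_add[of m "n - m"] by (simp add: add.commute)

definition lt where "lt a b \<longleftrightarrow> le a b \<and> a \<noteq> b"

lemma wf_lt: "wf {(x, y). lt x y}"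
proof (rule ccontr)
  assume "\<not> wf {(x, y). lt x y}"
  then obtain f where f: "\<And>i. lt (f (Suc i)) (f i)" unfolding wf_iff_no_infinite_down_chain by auto
  have chain: "lt (f j) (f i)" if "i < j" for i j
    using that
  proof (induction j)
    case 0 then show ?case by simp
  next
    case (Suc j)
    show ?case
    proof (cases "i = j")
      case True then show ?thesis using f by simp
    next
      case False
      then have "lt (f j) (f i)" using Suc by simp
      then show ?thesis using f[of j] unfolding lt_def using trans antisym by metis
    qed
  qed
  obtain i j where "i < j" "divides (f i) (f j)" using dickson[of f] by blast
  then have "le (f i) (f j)" "lt (f j) (f i)" using divides_le chain by auto
  then show False unfolding lt_def using antisym by blast
qed

lemma max_exists: "finite A \<Longrightarrow> A \<noteq> {} \<Longrightarrow> \<exists>m\<in>A. \<forall>m'\<in>A. le m' m"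
proof (induction A rule: finite_ne_induct)
  case (singleton x) then show ?case using refl by simp
next
  case (insert x F)
  then obtain m where m: "m \<in> F" "\<forall>m'\<in>F. le m' m" by blast
  show ?case
  proof (cases "le x m")
    case True then show ?thesis using m by auto
  next
    case False
    then have "le m x" using total by blast
    then show ?thesis using m trans refl by blast
  qed
qed

lemma lm_spec:
  fixes f :: "('v, 'a::zero) mpoly"
  assumes "f \<noteq> 0"
  shows "lead_mon le f \<in> Poly_Mapping.keys f" "\<And>m'. m' \<in> Poly_Mapping.keys f \<Longrightarrow> le m' (lead_mon le f)"
proof -
  have ex: "\<exists>!m. m \<in> Poly_Mapping.keys f \<and> (\<forall>m'\<in>Poly_Mapping.keys f. le m' m)"
  proof -
    obtain m where "m \<in> Poly_Mapping.keys f" "\<forall>m'\<in>Poly_Mapping.keys f. le m' m"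
      using max_exists[of "Poly_Mapping.keys f"] assms by auto
    moreover have "m2 = m" if "m2 \<in> Poly_Mapping.keys f \<and> (\<forall>m'\<in>Poly_Mapping.keys f. le m' m2)" for m2
      using that calculation antisym by blast
    ultimately show ?thesis by blast
  qed
  have "lead_mon le f \<in> Poly_Mapping.keys f \<and> (\<forall>m'\<in>Poly_Mapping.keys f. le m' (lead_mon le f))"
    unfolding lead_mon_def by (rule theI'[OF ex])
  then show "lead_mon le f \<in> Poly_Mapping.keys f" "\<And>m'. m' \<in> Poly_Mapping.keys f \<Longrightarrow> le m' (lead_mon le f)" by auto
qed

lemma lm_eqI:
  fixes f :: "('v, 'a::zero) mpoly"
  assumes "m \<in> Poly_Mapping.keys f" "\<And>m'. m' \<in> Poly_Mapping.keys f \<Longrightarrow> le m' m"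
  shows "lead_mon le f = m"
proof -
  have "f \<noteq> 0" using assms(1) by auto
  then show ?thesis using lm_spec[of f] assms antisym by blast
qed

lemma keys_tail:
  fixes f :: "('v, 'a::ab_group_add) mpoly"
  shows "Poly_Mapping.keys (f - Poly_Mapping.single a (Poly_Mapping.lookup f a)) = Poly_Mapping.keys f - {a}"
  by (auto simp: in_keys_iff lookup_minus lookup_single when_def split: if_splits)

lemma lm_mult:
  fixes f g :: "('v, 'a::field) mpoly"
  assumes "f \<noteq> 0" "g \<noteq> 0"
  shows "f * g \<noteq> 0" "lead_mon le (f * g) = lead_mon le f + lead_mon le g"
    "Poly_Mapping.lookup (f * g) (lead_mon le f + lead_mon le g) = Poly_Mapping.lookup f (lead_mon le f) * Poly_Mapping.lookup g (lead_mon le g)"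
proof -
  define a where "a = lead_mon le f"
  define b where "b = lead_mon le g"
  define ca where "ca = Poly_Mapping.lookup f a"
  define cb where "cb = Poly_Mapping.lookup g b"
  define f1 where "f1 = f - Poly_Mapping.single a ca"
  define g1 where "g1 = g - Poly_Mapping.single b cb"
  have fa: "a \<in> Poly_Mapping.keys f" "\<And>x. x \<in> Poly_Mapping.keys f \<Longrightarrow> le x a" using lm_spec[OF assms(1)] unfolding a_def by auto
  have gb: "b \<in> Poly_Mapping.keys g" "\<And>x. x \<in> Poly_Mapping.keys g \<Longrightarrow> le x b" using lm_spec[OF assms(2)] unfolding b_def by auto
  have kf1: "Poly_Mapping.keys f1 = Poly_Mapping.keys f - {a}" unfolding f1_def ca_def by (rule keys_tail)
  have kg1: "Poly_Mapping.keys g1 = Poly_Mapping.keys g - {b}" unfolding g1_def cb_def by (rule keys_tail)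
  have ca0: "ca \<noteq> 0" using fa(1) unfolding ca_def by (simp add: in_keys_iff)
  have cb0: "cb \<noteq> 0" using gb(1) unfolding cb_def by (simp add: in_keys_iff)
  have decomp: "f * g = Poly_Mapping.single (a + b) (ca * cb) + (Poly_Mapping.single a ca * g1 + f1 * g)"
  proof -
    have "f = Poly_Mapping.single a ca + f1" "g = Poly_Mapping.single b cb + g1"
      unfolding f1_def g1_def by simp_all
    then have "f * g = (Poly_Mapping.single a ca + f1) * (Poly_Mapping.single b cb + g1)" by simp
    also have "\<dots> = Poly_Mapping.single a ca * Poly_Mapping.single b cb + (Poly_Mapping.single a ca * g1 + f1 * (Poly_Mapping.single b cb + g1))"
      by (simp add: algebra_simps)
    also have "\<dots> = Poly_Mapping.single (a + b) (ca * cb) + (Poly_Mapping.single a ca * g1 + f1 * g)"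
      using \<open>g = _\<close> by (simp add: mult_single)
    finally show ?thesis .
  qed
  have n1: "a + b \<notin> Poly_Mapping.keys (Poly_Mapping.single a ca * g1)"
  proof
    assume "a + b \<in> Poly_Mapping.keys (Poly_Mapping.single a ca * g1)"
    then obtain x y where "x \<in> Poly_Mapping.keys (Poly_Mapping.single a ca)" "y \<in> Poly_Mapping.keys g1" "a + b = x + y"
      using keys_mult by blast
    then show False using kg1 ca0 by (auto split: if_splits)
  qed
  have n2: "a + b \<notin> Poly_Mapping.keys (f1 * g)"
  proof
    assume "a + b \<in> Poly_Mapping.keys (f1 * g)"
    then obtain x y where xy: "x \<in> Poly_Mapping.keys f1" "y \<in> Poly_Mapping.keys g" "a + b = x + y"
      using keys_mult by blast
    have "le x a" "x \<noteq> a" "le y b" using xy kf1 fa gb by auto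
    have "le (x + y) (a + y)" using compat[OF \<open>le x a\<close>] .
    moreover have "le (a + y) (a + b)" using le_add_mono[OF refl[of a] \<open>le y b\<close>] .
    ultimately have "a + y = a + b" using xy(3) antisym by (metis)
    then have "y = b" by simp
    then show False using xy(3) \<open>x \<noteq> a\<close> by simp
  qed
  have lk: "Poly_Mapping.lookup (f * g) (a + b) = ca * cb"
    using n1 n2 unfolding decomp by (simp add: lookup_add in_keys_iff)
  then have k: "a + b \<in> Poly_Mapping.keys (f * g)" using ca0 cb0 by (simp add: in_keys_iff)
  then show "f * g \<noteq> 0" by auto
  have "le m' (a + b)" if mk: "m' \<in> Poly_Mapping.keys (f * g)" for m'
  proof -
    obtain x y where "x \<in> Poly_Mapping.keys f" "y \<in> Poly_Mapping.keys g" "m' = x + y" using keys_mult[of f g] mk by blast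
    then show ?thesis using le_add_mono fa gb by blast
  qed
  then have "lead_mon le (f * g) = a + b" using lm_eqI k by blast
  then show "lead_mon le (f * g) = lead_mon le f + lead_mon le g" unfolding a_def b_def .
  show "Poly_Mapping.lookup (f * g) (lead_mon le f + lead_mon le g) = Poly_Mapping.lookup f (lead_mon le f) * Poly_Mapping.lookup g (lead_mon le g)"
    using lk unfolding a_def b_def ca_def cb_def .
qed

end




lemma mon_mult: "(mon a :: ('v, 'a::comm_ring_1) mpoly) * mon b = mon (a + b)"
  unfolding mon_def by (simp add: mult_single)

lemma keys_mon: "Poly_Mapping.keys (mon m :: ('v, 'a::comm_ring_1) mpoly) = {m}"
  unfolding mon_def by simp

lemma mon_ideal_keys:
  fixes p :: "('v, 'a::comm_ring_1) mpoly"
  assumes "p \<in> ideal_gen (mon ` G)" "m \<in> Poly_Mapping.keys p"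
  shows "\<exists>g\<in>G. divides g m"
proof -
  define K :: "('v, 'a) mpoly set" where "K = {p. \<forall>m\<in>Poly_Mapping.keys p. \<exists>g\<in>G. divides g m}"
  have "is_ideal K" unfolding is_ideal_def
  proof (intro conjI ballI allI)
    show "0 \<in> K" unfolding K_def by simp
  next
    fix a b assume "a \<in> K" "b \<in> K"
    then show "a + b \<in> K" unfolding K_def using keys_add[of a b] by blast
  next
    fix r a assume a: "a \<in> K"
    show "r * a \<in> K" unfolding K_def
    proof (rule CollectI, rule ballI)
      fix m assume "m \<in> Poly_Mapping.keys (r * a)"
      then obtain x y where "y \<in> Poly_Mapping.keys a" "m = x + y" using keys_mult[of r a] by blast
      then show "\<exists>g\<in>G. divides g m" using a divides_add_left unfolding K_def by blast
    qed
  qed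
  moreover have "mon ` G \<subseteq> K" unfolding K_def by (auto simp: keys_mon divides_def)
  ultimately have "p \<in> K" using gen_least assms(1) by blast
  then show ?thesis using assms(2) unfolding K_def by blast
qed

lemma mon_ideal_mem:
  fixes c :: "'a::comm_ring_1"
  assumes "g \<in> G" "divides g m"
  shows "Poly_Mapping.single m c \<in> ideal_gen (mon ` G)"
proof -
  have "Poly_Mapping.single m c = Poly_Mapping.single (m - g) c * mon g"
    using divides_add[OF assms(2)] unfolding mon_def by (simp add: mult_single add.commute)
  moreover have "mon g \<in> ideal_gen (mon ` G)" using assms(1) gen_subset by blast
  ultimately show ?thesis using is_idealD(3)[OF is_ideal_gen] by metis
qed

context torder
begin

lemma init_eq: "init_ideal le J = ideal_gen (mon ` {lead_mon le f | f. f \<in> J \<and> f \<noteq> 0})"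
  unfolding init_ideal_def by (rule arg_cong[where f = ideal_gen]) blast

lemma in_gen: "f \<in> J \<Longrightarrow> f \<noteq> 0 \<Longrightarrow> mon (lead_mon le f) \<in> init_ideal le J"
  unfolding init_ideal_def by (rule gen_subset[THEN subsetD]) blast

lemma in_ideal: "is_ideal (init_ideal le J)"
  unfolding init_ideal_def by (rule is_ideal_gen)

lemma in_lm:
  fixes J :: "('v, 'a::field) mpoly set"
  assumes "mon m \<in> init_ideal le J"
  shows "\<exists>g\<in>J. g \<noteq> 0 \<and> divides (lead_mon le g) m"
  using mon_ideal_keys[of "mon m" "{lead_mon le f | f. f \<in> J \<and> f \<noteq> 0}" m] assms
  unfolding init_eq by (auto simp: keys_mon)

lemma in_mono: "J \<subseteq> K \<Longrightarrow> init_ideal le J \<subseteq> init_ideal le K"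
  unfolding init_ideal_def by (rule gen_mono) blast

lemma groebner:
  fixes J K :: "('v, 'a::field) mpoly set"
  assumes J: "is_ideal J" and K: "is_ideal K" and JK: "J \<subseteq> K" and inK: "init_ideal le K \<subseteq> init_ideal le J"
  shows "K \<subseteq> J"
proof -
  have main: "\<forall>f. f \<in> K \<longrightarrow> f \<noteq> 0 \<longrightarrow> lead_mon le f = m \<longrightarrow> f \<in> J" for m
  proof (induction m rule: wf_induct[OF wf_lt])
    case (1 m)
    show ?case
    proof (intro allI impI)
      fix f assume fK: "f \<in> K" and f0: "f \<noteq> 0" and fm: "lead_mon le f = m"
      have "mon m \<in> init_ideal le K" using in_gen[OF fK f0] fm by simp
      then have "mon m \<in> init_ideal le J" using inK by blast
      then obtain g where g: "g \<in> J" "g \<noteq> 0" "divides (lead_mon le g) m" using in_lm by blast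
      define d where "d = m - lead_mon le g"
      have md: "m = d + lead_mon le g" using divides_add[OF g(3)] unfolding d_def by (simp add: add.commute)
      have mk: "m \<in> Poly_Mapping.keys f" using lm_spec(1)[OF f0] fm by simp
      have gl: "Poly_Mapping.lookup g (lead_mon le g) \<noteq> 0" using lm_spec(1)[OF g(2)] by (simp add: in_keys_iff)
      define c where "c = Poly_Mapping.lookup f m / Poly_Mapping.lookup g (lead_mon le g)"
      have c0: "c \<noteq> 0" using mk gl unfolding c_def by (simp add: in_keys_iff)
      define h where "h = Poly_Mapping.single d c * g"
      have s0: "Poly_Mapping.single d c \<noteq> 0" using c0 by (metis lookup_single_eq lookup_zero)
      have lms: "lead_mon le (Poly_Mapping.single d c) = d" using c0 by (intro lm_eqI) (auto simp: refl)
      have lsd: "Poly_Mapping.lookup (Poly_Mapping.single d c) d = c" by simp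
      have hJ: "h \<in> J" unfolding h_def using is_idealD(3)[OF J g(1)] .
      have lmh: "lead_mon le h = m" using lm_mult(2)[OF s0 g(2)] lms md unfolding h_def by simp
      have h0: "h \<noteq> 0" using lm_mult(1)[OF s0 g(2)] unfolding h_def .
      have lkh: "Poly_Mapping.lookup h m = Poly_Mapping.lookup f m"
        using lm_mult(3)[OF s0 g(2)] lms lsd md gl unfolding h_def c_def by simp
      define f' where "f' = f - h"
      have f'K: "f' \<in> K" unfolding f'_def using ideal_diff[OF K fK] hJ JK by blast
      show "f \<in> J"
      proof (cases "f' = 0")
        case True then have "f = h" unfolding f'_def by simp
        then show ?thesis using hJ by simp
      next
        case False
        have keysle: "le k m" if "k \<in> Poly_Mapping.keys f'" for k
        proof -
          have "k \<in> Poly_Mapping.keys f \<or> k \<in> Poly_Mapping.keys h" using that keys_diff[of f h] unfolding f'_def by blast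
          then show ?thesis using lm_spec(2)[OF f0, of k] lm_spec(2)[OF h0, of k] fm lmh by auto
        qed
        have mnot: "m \<notin> Poly_Mapping.keys f'" unfolding f'_def using lkh by (simp add: in_keys_iff lookup_minus)
        have "lt (lead_mon le f') m"
          using lm_spec(1)[OF False] keysle mnot unfolding lt_def by metis
        then have "f' \<in> J" using 1 f'K False by blast
        then have "f' + h \<in> J" using is_idealD(2)[OF J _ hJ] by blast
        then show ?thesis unfolding f'_def by simp
      qed
    qed
  qed
  show ?thesis
  proof
    fix f assume "f \<in> K"
    then show "f \<in> J" using main is_idealD(1)[OF J] by (cases "f = 0") auto
  qed
qed

lemma in_gen_sub:
  assumes "\<And>f. f \<in> K \<Longrightarrow> f \<noteq> 0 \<Longrightarrow> mon (lead_mon le f) \<in> X" "is_ideal X"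
  shows "init_ideal le K \<subseteq> X"
  unfolding init_ideal_def by (rule gen_least[OF assms(2)]) (use assms(1) in blast)

lemma acc:
  fixes J :: "nat \<Rightarrow> ('v, 'a::field) mpoly set"
  assumes id: "\<And>i. is_ideal (J i)" and ch: "\<And>i. J i \<subset> J (Suc i)"
  shows False
proof -
  have mono: "J i \<subseteq> J j" if "i \<le> j" for i j
    using lift_Suc_mono_le[of J, OF _ that] ch by blast
  have "\<exists>f. f \<in> J (Suc i) \<and> f \<noteq> 0 \<and> mon (lead_mon le f) \<notin> init_ideal le (J i)" for i
  proof (rule ccontr)
    assume "\<not> ?thesis"
    then have "init_ideal le (J (Suc i)) \<subseteq> init_ideal le (J i)"
      by (intro in_gen_sub in_ideal) blast
    then have "J (Suc i) \<subseteq> J i" using groebner[OF id id] ch by blast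
    then show False using ch[of i] by blast
  qed
  then obtain F where F: "\<And>i. F i \<in> J (Suc i) \<and> F i \<noteq> 0 \<and> mon (lead_mon le (F i)) \<notin> init_ideal le (J i)"
    by metis
  obtain i j where ij: "i < j" "divides (lead_mon le (F i)) (lead_mon le (F j))"
    using dickson[of "\<lambda>i. lead_mon le (F i)"] by blast
  have "mon (lead_mon le (F i)) \<in> init_ideal le (J j)"
    using in_gen[of "F i" "J (Suc i)"] F[of i] in_mono[OF mono[of "Suc i" j]] ij(1) by auto
  then have "mon (lead_mon le (F i)) * mon (lead_mon le (F j) - lead_mon le (F i)) \<in> init_ideal le (J j)"
    using ideal_mult_right[OF in_ideal] by blast
  then have "mon (lead_mon le (F j)) \<in> init_ideal le (J j)"
    using divides_add[OF ij(2)] by (simp add: mon_mult)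
  then show False using F[of j] by blast
qed

lemma wf_ideals: "wf {(K, J :: ('v, 'a::field) mpoly set). is_ideal J \<and> is_ideal K \<and> J \<subset> K}"
proof (rule ccontr)
  assume "\<not> ?thesis"
  then obtain f :: "nat \<Rightarrow> ('v, 'a) mpoly set" where "\<forall>i. is_ideal (f (Suc i)) \<and> is_ideal (f i) \<and> f i \<subset> f (Suc i)"
    unfolding wf_iff_no_infinite_down_chain by auto
  then show False using acc[of f] by blast
qed

lemma in_mult:
  fixes J K :: "('v, 'a::field) mpoly set"
  shows "ideal_mult (init_ideal le J) (init_ideal le K) \<subseteq> init_ideal le (ideal_mult J K)"
proof -
  have "ideal_mult (init_ideal le J) (init_ideal le K) \<subseteq>
     ideal_gen {a * b | a b. a \<in> mon ` {lead_mon le f | f. f \<in> J \<and> f \<noteq> 0} \<and> b \<in> mon ` {lead_mon le f | f. f \<in> K \<and> f \<noteq> 0}}"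
    unfolding init_eq by (rule gen_mult_gen)
  also have "\<dots> \<subseteq> init_ideal le (ideal_mult J K)"
  proof (rule gen_least[OF in_ideal], rule subsetI)
    fix x :: "('v, 'a) mpoly" assume "x \<in> {a * b | a b. a \<in> mon ` {lead_mon le f | f. f \<in> J \<and> f \<noteq> 0} \<and> b \<in> mon ` {lead_mon le f | f. f \<in> K \<and> f \<noteq> 0}}"
    then obtain f g where fg: "f \<in> J" "f \<noteq> 0" "g \<in> K" "g \<noteq> 0" "x = mon (lead_mon le f) * mon (lead_mon le g)" by blast
    then have "x = mon (lead_mon le f + lead_mon le g)" using mon_mult by metis
    then have "x = mon (lead_mon le (f * g))" using lm_mult(2)[OF fg(2,4)] by simp
    moreover have "f * g \<in> ideal_mult J K" using fg mult_mem by blast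
    ultimately show "x \<in> init_ideal le (ideal_mult J K)" using in_gen lm_mult(1)[OF fg(2,4)] by simp
  qed
  finally show ?thesis .
qed

lemma in_UNIV: "init_ideal le (UNIV :: ('v, 'a::field) mpoly set) = UNIV"
proof -
  have "(mon (lead_mon le (1 :: ('v, 'a) mpoly)) :: ('v, 'a) mpoly) \<in> init_ideal le UNIV" by (rule in_gen) simp_all
  moreover have "lead_mon le (1 :: ('v, 'a) mpoly) = 0" by (rule lm_eqI) (simp_all add: refl)
  ultimately have "1 \<in> init_ideal le (UNIV :: ('v, 'a) mpoly set)" by (simp add: mon_def)
  then show ?thesis using ideal_mult_right[OF in_ideal] by (metis UNIV_eq_I mult_1)
qed

lemma in_pow:
  fixes I :: "('v, 'a::field) mpoly set"
  shows "ideal_pow (init_ideal le I) n \<subseteq> init_ideal le (ideal_pow I n)"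
proof (induction n)
  case 0 then show ?case by (simp add: in_UNIV)
next
  case (Suc n)
  have "ideal_mult (init_ideal le I) (ideal_pow (init_ideal le I) n) \<subseteq> ideal_mult (init_ideal le I) (init_ideal le (ideal_pow I n))"
    by (rule ideal_mult_mono[OF order_refl Suc])
  also have "\<dots> \<subseteq> init_ideal le (ideal_mult I (ideal_pow I n))" by (rule in_mult)
  finally show ?case by simp
qed

end




context torder
begin

lemma prime_cover:
  fixes J :: "('v, 'a::field) mpoly set"
  shows "is_ideal J \<longrightarrow> (\<exists>F. finite F \<and> (\<forall>P\<in>F. prime_ideal P \<and> J \<subseteq> P) \<and>
           (\<forall>P. prime_ideal P \<and> J \<subseteq> P \<longrightarrow> (\<exists>P0\<in>F. P0 \<subseteq> P)))"
proof (induction J rule: wf_induct[OF wf_ideals])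
  case (1 J)
  show ?case
  proof
    assume J: "is_ideal J"
    show "\<exists>F. finite F \<and> (\<forall>P\<in>F. prime_ideal P \<and> J \<subseteq> P) \<and>
           (\<forall>P. prime_ideal P \<and> J \<subseteq> P \<longrightarrow> (\<exists>P0\<in>F. P0 \<subseteq> P))"
    proof (cases "J = UNIV")
      case True
      have "\<forall>P. prime_ideal P \<and> J \<subseteq> P \<longrightarrow> (\<exists>P0\<in>{}. P0 \<subseteq> P)"
        using True unfolding prime_ideal_def by auto
      then show ?thesis by blast
    next
      case nU: False
      show ?thesis
      proof (cases "prime_ideal J")
        case True
        have "finite {J} \<and> (\<forall>P\<in>{J}. prime_ideal P \<and> J \<subseteq> P) \<and>
           (\<forall>P. prime_ideal P \<and> J \<subseteq> P \<longrightarrow> (\<exists>P0\<in>{J}. P0 \<subseteq> P))" using True by blast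
        then show ?thesis by blast
      next
        case False
        then obtain a b where ab: "a * b \<in> J" "a \<notin> J" "b \<notin> J"
          using J nU unfolding prime_ideal_def by blast
        define Ja where "Ja = ideal_gen (insert a J)"
        define Jb where "Jb = ideal_gen (insert b J)"
        have Jai: "is_ideal Ja" "J \<subseteq> Ja" "a \<in> Ja" unfolding Ja_def using is_ideal_gen gen_subset by blast+
        have Jbi: "is_ideal Jb" "J \<subseteq> Jb" "b \<in> Jb" unfolding Jb_def using is_ideal_gen gen_subset by blast+
        have "J \<subset> Ja" using Jai(2,3) ab by blast
        then have "(Ja, J) \<in> {(K, J). is_ideal J \<and> is_ideal K \<and> J \<subset> K}" using Jai(1) J by simp
        note IHa = 1[rule_format, OF this, rule_format, OF Jai(1)]
        then obtain Fa where Fa: "finite Fa" "\<forall>P\<in>Fa. prime_ideal P \<and> Ja \<subseteq> P"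
          "\<forall>P. prime_ideal P \<and> Ja \<subseteq> P \<longrightarrow> (\<exists>P0\<in>Fa. P0 \<subseteq> P)"
          by blast
        have "J \<subset> Jb" using Jbi(2,3) ab by blast
        then have "(Jb, J) \<in> {(K, J). is_ideal J \<and> is_ideal K \<and> J \<subset> K}" using Jbi(1) J by simp
        note IHb = 1[rule_format, OF this, rule_format, OF Jbi(1)]
        then obtain Fb where Fb: "finite Fb" "\<forall>P\<in>Fb. prime_ideal P \<and> Jb \<subseteq> P"
          "\<forall>P. prime_ideal P \<and> Jb \<subseteq> P \<longrightarrow> (\<exists>P0\<in>Fb. P0 \<subseteq> P)"
          by blast
        have c1: "finite (Fa \<union> Fb)" using Fa Fb by simp
        have c2: "\<forall>P\<in>Fa \<union> Fb. prime_ideal P \<and> J \<subseteq> P" using Fa(2) Fb(2) Jai(2) Jbi(2) by blast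
        have c3: "\<exists>P0\<in>Fa \<union> Fb. P0 \<subseteq> P" if P: "prime_ideal P" "J \<subseteq> P" for P
        proof -
          have "a \<in> P \<or> b \<in> P" using P(1) ab(1) P(2) unfolding prime_ideal_def by blast
          then show ?thesis
          proof
            assume "a \<in> P"
            have Pi: "is_ideal P" using P(1) unfolding prime_ideal_def by blast
            have "Ja \<subseteq> P" unfolding Ja_def by (rule gen_least[OF Pi]) (use \<open>a \<in> P\<close> P(2) in blast)
            then show ?thesis using Fa(3) P by blast
          next
            assume "b \<in> P"
            have Pi: "is_ideal P" using P(1) unfolding prime_ideal_def by blast
            have "Jb \<subseteq> P" unfolding Jb_def by (rule gen_least[OF Pi]) (use \<open>b \<in> P\<close> P(2) in blast)
            then show ?thesis using Fb(3) P by blast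
          qed
        qed
        show ?thesis
        proof (rule exI[of _ "Fa \<union> Fb"], intro conjI allI impI)
          show "finite (Fa \<union> Fb)" by (rule c1)
          show "\<forall>P\<in>Fa \<union> Fb. prime_ideal P \<and> J \<subseteq> P" by (rule c2)
          fix P assume "prime_ideal P \<and> J \<subseteq> P"
          then show "\<exists>P0\<in>Fa \<union> Fb. P0 \<subseteq> P" using c3 by blast
        qed
      qed
    qed
  qed
qed

lemma min_finite:
  fixes I :: "('v, 'a::field) mpoly set"
  assumes "is_ideal I"
  shows "finite (Min_primes I)"
proof -
  obtain F where F: "finite F" "\<forall>P\<in>F. prime_ideal P \<and> I \<subseteq> P"
    "\<forall>P. prime_ideal P \<and> I \<subseteq> P \<longrightarrow> (\<exists>P0\<in>F. P0 \<subseteq> P)"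
    using prime_cover[of I] assms by blast
  have "Min_primes I \<subseteq> F"
  proof
    fix P assume P: "P \<in> Min_primes I"
    then have "prime_ideal P" "I \<subseteq> P" unfolding Min_primes_def by auto
    then obtain P0 where "P0 \<in> F" "P0 \<subseteq> P" using F(3) by blast
    moreover have "P0 = P" using P F(2) calculation unfolding Min_primes_def by blast
    ultimately show "P \<in> F" by simp
  qed
  then show ?thesis using F(1) finite_subset by blast
qed

end

lemma min_in_ass:
  fixes I :: "'r::comm_ring_1 set"
  assumes fin: "finite (Min_primes I)" and IM: "I = \<Inter>(Min_primes I)" and P: "P \<in> Min_primes I"
  shows "P \<in> Ass I"
proof -
  have Pp: "prime_ideal P" "I \<subseteq> P" using P unfolding Min_primes_def by auto
  define Oth where "Oth = Min_primes I - {P}"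
  have "\<forall>P'\<in>Oth. \<exists>x. x \<in> P' \<and> x \<notin> P"
  proof
    fix P' assume "P' \<in> Oth"
    then have "P' \<in> Min_primes I" "P' \<noteq> P" unfolding Oth_def by auto
    then have "\<not> P' \<subseteq> P" using P unfolding Min_primes_def by blast
    then show "\<exists>x. x \<in> P' \<and> x \<notin> P" by blast
  qed
  then obtain x where x: "\<And>P'. P' \<in> Oth \<Longrightarrow> x P' \<in> P' \<and> x P' \<notin> P" by metis
  define f where "f = prod x Oth"
  have fO: "finite Oth" unfolding Oth_def using fin by simp
  have fP: "f \<notin> P" unfolding f_def using prime_prod[OF Pp(1) fO] x by blast
  have fP': "f \<in> P'" if "P' \<in> Oth" for P'
  proof -
    have "prime_ideal P'" using that unfolding Oth_def Min_primes_def by auto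
    then show ?thesis unfolding f_def using ideal_prod_mem[OF _ fO that] x[OF that]
      unfolding prime_ideal_def by blast
  qed
  have "P = ideal_colon I f"
  proof
    show "P \<subseteq> ideal_colon I f"
    proof
      fix y assume y: "y \<in> P"
      have "y * f \<in> Q" if Q: "Q \<in> Min_primes I" for Q
      proof (cases "Q = P")
        case True then show ?thesis using y Pp(1) ideal_mult_right unfolding prime_ideal_def by blast
      next
        case False
        then have "Q \<in> Oth" using Q unfolding Oth_def by auto
        moreover have "prime_ideal Q" using Q unfolding Min_primes_def by auto
        ultimately show ?thesis using fP' is_idealD(3) unfolding prime_ideal_def by blast
      qed
      then have "y * f \<in> I" using IM by blast
      then show "y \<in> ideal_colon I f" unfolding ideal_colon_def by simp
    qed
  next
    show "ideal_colon I f \<subseteq> P"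
    proof
      fix y assume "y \<in> ideal_colon I f"
      then have "y * f \<in> P" using Pp(2) unfolding ideal_colon_def by auto
      then show "y \<in> P" using fP Pp(1) unfolding prime_ideal_def by blast
    qed
  qed
  then show ?thesis using Pp(1) unfolding Ass_def by blast
qed

context torder
begin

lemma sq_radical:
  fixes J :: "('v, 'a::field) mpoly set"
  assumes sq: "squarefree_monomial_ideal J"
  shows "h * h \<in> J \<Longrightarrow> h \<in> J"
proof (induction "card (Poly_Mapping.keys h)" arbitrary: h rule: less_induct)
  case less
  obtain G where G: "\<forall>m\<in>G. \<forall>v. Poly_Mapping.lookup m v \<le> 1" "J = ideal_gen (mon ` G)"
    using sq unfolding squarefree_monomial_ideal_def by blast
  have Ji: "is_ideal J" using G(2) is_ideal_gen by simp
  show ?case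
  proof (cases "h = 0")
    case True then show ?thesis using is_idealD(1)[OF Ji] by simp
  next
    case False
    define a where "a = lead_mon le h"
    define c where "c = Poly_Mapping.lookup h a"
    define l where "l = Poly_Mapping.single a c"
    have ak: "a \<in> Poly_Mapping.keys h" unfolding a_def using lm_spec(1)[OF False] .
    have "lead_mon le (h * h) = a + a" unfolding a_def using lm_mult(2)[OF False False] .
    then have "a + a \<in> Poly_Mapping.keys (h * h)" using lm_spec(1)[OF lm_mult(1)[OF False False]] by simp
    then obtain g where g: "g \<in> G" "divides g (a + a)" using mon_ideal_keys less.prems G(2) by blast
    have "divides g a" unfolding divides_def
    proof
      fix v
      have "Poly_Mapping.lookup g v \<le> 1" using G(1) g(1) by blast
      moreover have "Poly_Mapping.lookup g v \<le> Poly_Mapping.lookup a v + Poly_Mapping.lookup a v"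
        using g(2) unfolding divides_def by (simp add: lookup_add)
      ultimately show "Poly_Mapping.lookup g v \<le> Poly_Mapping.lookup a v" by linarith
    qed
    then have lJ: "l \<in> J" unfolding l_def G(2) using mon_ideal_mem g(1) by blast
    define h1 where "h1 = h - l"
    have kh1: "Poly_Mapping.keys h1 = Poly_Mapping.keys h - {a}" unfolding h1_def l_def c_def by (rule keys_tail)
    have card: "card (Poly_Mapping.keys h1) < card (Poly_Mapping.keys h)"
      unfolding kh1 by (rule card_Diff1_less[OF finite_keys ak])
    have "h1 * h1 = h * h - l * (h + h1)" unfolding h1_def by (simp add: algebra_simps)
    moreover have "l * (h + h1) \<in> J" using ideal_mult_right[OF Ji lJ] .
    ultimately have "h1 * h1 \<in> J" using ideal_diff[OF Ji less.prems] by simp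
    then have "h1 \<in> J" using less.hyps card by blast
    then have "h1 + l \<in> J" using is_idealD(2)[OF Ji _ lJ] by blast
    then show ?thesis unfolding h1_def by simp
  qed
qed

end




context torder
begin

lemma main:
  fixes I :: "('v, 'a::field) mpoly set"
  assumes Ii: "is_ideal I"
    and sqI: "squarefree_monomial_ideal (init_ideal le I)"
    and b: "symb_pow (init_ideal le I) t = ideal_pow (init_ideal le I) t"
    and c: "\<forall>P\<in>Min_primes I. init_ideal le (symb_pow P t) = symb_pow (init_ideal le P) t"
    and d: "init_ideal le I = (\<Inter>P\<in>Min_primes I. init_ideal le P)"
  shows "symb_pow I t = ideal_pow I t"
proof -
  let ?M = "init_ideal le"
  have minp: "prime_ideal P" "I \<subseteq> P" if "P \<in> Min_primes I" for P
    using that unfolding Min_primes_def by auto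
  have finM: "finite (Min_primes I)" by (rule min_finite[OF Ii])
  have IM: "I = \<Inter>(Min_primes I)"
  proof
    show "I \<subseteq> \<Inter>(Min_primes I)" using minp(2) by blast
  next
    have J0i: "is_ideal (\<Inter>(Min_primes I))"
      by (rule is_ideal_Inter) (use minp(1) in \<open>auto simp: prime_ideal_def\<close>)
    have "?M (\<Inter>(Min_primes I)) \<subseteq> ?M P" if "P \<in> Min_primes I" for P
      by (rule in_mono) (use that in blast)
    then have "?M (\<Inter>(Min_primes I)) \<subseteq> ?M I" unfolding d by blast
    then show "\<Inter>(Min_primes I) \<subseteq> I"
      using groebner[OF Ii J0i] minp(2) by blast
  qed
  have ass: "P \<in> Ass I" if "P \<in> Min_primes I" for P
    by (rule min_in_ass[OF finM IM that])
  have S3: "g \<in> symb_pow P t" if g: "g \<in> symb_pow I t" and P: "P \<in> Min_primes I" for g P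
  proof -
    have "g \<in> local_contraction (ideal_pow I t) P" using g ass[OF P] unfolding symb_pow_def by blast
    then obtain s where s: "s \<notin> P" "s * g \<in> ideal_pow I t" unfolding local_contraction_def by blast
    then have "s * g \<in> ideal_pow P t" using ideal_pow_mono[OF minp(2)[OF P]] by blast
    then show ?thesis unfolding symb_pow_prime[OF minp(1)[OF P]] local_contraction_def using s(1) by blast
  qed
  have S4: "?M (symb_pow I t) \<subseteq> symb_pow (?M I) t"
  proof (rule in_gen_sub[OF _ symb_pow_ideal])
    fix g assume g: "g \<in> symb_pow I t" "g \<noteq> 0"
    define x where "x = (mon (lead_mon le g) :: ('v, 'a) mpoly)"
    show "mon (lead_mon le g) \<in> symb_pow (?M I) t"
      unfolding symb_pow_def x_def[symmetric]
    proof
      fix Q assume QA: "Q \<in> Ass (?M I)"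
      then obtain h where Q: "prime_ideal Q" "Q = ideal_colon (?M I) h" unfolding Ass_def by blast
      have Qeq: "Q = (\<Inter>N\<in>?M ` Min_primes I. ideal_colon N h)"
        unfolding Q(2) d ideal_colon_def by blast
      obtain N0 where N0: "N0 \<in> ?M ` Min_primes I" "ideal_colon N0 h \<subseteq> Q"
        using prime_finite_inter[OF Q(1) finite_imageI[OF finM] _ Qeq] in_ideal by blast
      then obtain P0 where P0: "P0 \<in> Min_primes I" "N0 = ?M P0" by blast
      have QN0: "Q = ideal_colon N0 h" using N0(2) Qeq N0(1) by blast
      have QAss: "Q \<in> Ass N0" using Q(1) QN0 unfolding Ass_def by blast
      have "x \<in> ?M (symb_pow P0 t)" unfolding x_def by (rule in_gen[OF S3[OF g(1) P0(1)] g(2)])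
      then have "x \<in> symb_pow N0 t" using c P0 by simp
      then have "x \<in> local_contraction (ideal_pow N0 t) Q" using QAss unfolding symb_pow_def by blast
      then obtain s where s: "s \<notin> Q" "s * x \<in> ideal_pow N0 t" unfolding local_contraction_def by blast
      have N0Q: "N0 \<subseteq> Q"
      proof
        fix y assume "y \<in> N0"
        then have "y * h \<in> N0" using ideal_mult_right[OF in_ideal] P0(2) by blast
        then show "y \<in> Q" unfolding QN0 ideal_colon_def by simp
      qed
      have sxQ: "s * x \<in> ideal_pow Q t" using s(2) ideal_pow_mono[OF N0Q] by blast
      have hQ: "h \<notin> Q"
      proof
        assume "h \<in> Q"
        then have "h * h \<in> ?M I" unfolding Q(2) ideal_colon_def by simp
        then have "h \<in> ?M I" by (rule sq_radical[OF sqI])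
        then have "1 \<in> Q" unfolding Q(2) ideal_colon_def by simp
        then show False using prime_one[OF Q(1)] by simp
      qed
      have hq: "h * q \<in> ?M I" if "q \<in> Q" for q
        using that unfolding Q(2) ideal_colon_def by (simp add: mult.commute)
      have "h ^ t * (s * x) \<in> ideal_pow (?M I) t" by (rule pow_scale[OF in_ideal hq sxQ])
      moreover have "h ^ t * s \<notin> Q"
      proof -
        have "(\<Prod>i\<in>{..<t}. h) \<notin> Q" by (rule prime_prod[OF Q(1)]) (use hQ in auto)
        then have "h ^ t \<notin> Q" by simp
        then show ?thesis using s(1) Q(1) unfolding prime_ideal_def by blast
      qed
      ultimately show "x \<in> local_contraction (ideal_pow (?M I) t) Q"
        unfolding local_contraction_def by (auto simp: mult.assoc intro!: exI[of _ "h ^ t * s"])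
    qed
  qed
  have S5: "?M (symb_pow I t) \<subseteq> ?M (ideal_pow I t)"
    using S4 b in_pow[of I t] by simp
  have "symb_pow I t \<subseteq> ideal_pow I t"
    by (rule groebner[OF is_ideal_pow symb_pow_ideal pow_sub_symb_pow S5])
  then show ?thesis using pow_sub_symb_pow by blast
qed

end



theorem lemma3p17:
  fixes I :: "('v::finite, 'a::field) mpoly set"
    and le :: "('v \<Rightarrow>\<^sub>0 nat) \<Rightarrow> ('v \<Rightarrow>\<^sub>0 nat) \<Rightarrow> bool"
    and t :: nat
  assumes "t > 0"
    and "is_ideal I"
    and "term_order le"
    and "squarefree_monomial_ideal (init_ideal le I)"
    and a: "\<forall>P\<in>Min_primes I. squarefree_monomial_ideal (init_ideal le P)"
    and b: "symb_pow (init_ideal le I) t = ideal_pow (init_ideal le I) t"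
    and c: "\<forall>P\<in>Min_primes I. init_ideal le (symb_pow P t) = symb_pow (init_ideal le P) t"
    and d: "init_ideal le I = (\<Inter>P\<in>Min_primes I. init_ideal le P)"
  shows "symb_pow I t = ideal_pow I t"
proof -
  interpret torder le by (rule torder.intro) (rule assms(3))
  show ?thesis by (rule main[OF assms(2) assms(4) b c d])
qed

end
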